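(* For every $\mu\in[0,2]$, with $v_1=\frac{2}{2+\mu}$, \[ \psi(C^{\searrow}_\mu)=-2v_1^2+6v_1-5+\frac1{v_1},\qquad \xi(C^{\searrow}_\mu)=-4v_1^2+20v_1-17+\frac{2}{v_1}-\frac1{v_1^2}-12\ln(v_1). \] As $\mu$ ranges over $[0,2]$, $\mu\mapsto\psi(C^{\searrow}_\mu)$ is continuous and strictly decreasing from $0$ to $-\frac12$, and $\mu\mapsto\xi(C^{\searrow}_\mu)$ is continuous and strictly increasing from $0$ to $12\ln 2-8$.
   Context: For $\mu\in[0,2]$ let $v_0=\frac{\mu}{2+\mu}$, $v_1=\frac{2}{2+\mu}$ and define $h_\mu(t,v)=h_1(v)\mathbf{1}_{\{t\le v\}}+h_2(v)\mathbf{1}_{\{t>v\}}$ on $[0,1]^2$, where $(h_1,h_2)(v)=(0,\frac{v}{1-v})$ for $v\in[0,v_0]$, $(h_1,h_2)(v)=(v-\frac{\mu}{2}(1-v),\,v+\frac{\mu}{2}v)$ for $v\in(v_0,v_1]$, and $(h_1,h_2)(v)=(2-\frac1v,\,1)$ for $v\in(v_1,1]$. $C^{\searrow}_\mu(u,v):=\int_0^u h_\mu(t,v)\,dt$ (this is in general not a copula). For any function $C$ of this form with first partial derivative $h=\partial_1C$, set $\xi(C)=6\int_0^1\int_0^1 h(t,v)^2\,dt\,dv-2$ and $\psi(C)=6\int_0^1\int_0^1\mathbf{1}_{\{t\le v\}}h(t,v)\,dt\,dv-2$ (for copulas these coincide with $6\int\int(\partial_1C)^2-2$ and $6\int_0^1C(u,u)\,du-2$).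 *)

theory Defs
  imports "HOL-Analysis.Analysis"
begin

definition v0 :: "real \<Rightarrow> real" where "v0 \<mu> = \<mu> / (2 + \<mu>)"
definition v1 :: "real \<Rightarrow> real" where "v1 \<mu> = 2 / (2 + \<mu>)"

definition h1 :: "real \<Rightarrow> real \<Rightarrow> real" where
  "h1 \<mu> v = (if v \<le> v0 \<mu> then 0
              else if v \<le> v1 \<mu> then v - \<mu> / 2 * (1 - v)
              else 2 - 1 / v)"

definition h2 :: "real \<Rightarrow> real \<Rightarrow> real" where
  "h2 \<mu> v = (if v \<le> v0 \<mu> then v / (1 - v)
              else if v \<le> v1 \<mu> then v + \<mu> / 2 * v
              else 1)"

definition h_mu :: "real \<Rightarrow> real \<Rightarrow> real \<Rightarrow> real" where
  "h_mu \<mu> t v = (if t \<le> v then h1 \<mu> v else h2 \<mu> v)"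

definition C_searrow :: "real \<Rightarrow> real \<Rightarrow> real \<Rightarrow> real" where
  "C_searrow \<mu> u v = integral {0..u} (\<lambda>t. h_mu \<mu> t v)"

text \<open>xi and psi computed from the first partial derivative h of C (double integrals over the
  unit square, written as iterated integrals).\<close>
definition xi_h :: "(real \<Rightarrow> real \<Rightarrow> real) \<Rightarrow> real" where
  "xi_h h = 6 * integral {0..1} (\<lambda>v. integral {0..1} (\<lambda>t. (h t v)\<^sup>2)) - 2"

definition psi_h :: "(real \<Rightarrow> real \<Rightarrow> real) \<Rightarrow> real" where
  "psi_h h = 6 * integral {0..1} (\<lambda>v. integral {0..1} (\<lambda>t. (if t \<le> v then 1 else 0) * h t v)) - 2"

end

theory Submission imports Defs begin

lemma ftc:
  fixes F f :: "real \<Rightarrow> real"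
  assumes "a \<le> b" "\<And>x. x \<in> {a..b} \<Longrightarrow> (F has_real_derivative f x) (at x)"
  shows "(f has_integral (F b - F a)) {a..b}"
  apply (rule fundamental_theorem_of_calculus[OF assms(1)])
  using assms(2) has_real_derivative_iff_has_vector_derivative has_vector_derivative_at_within by blast

lemma inner:
  fixes A B v :: real
  assumes "0 \<le> v" "v \<le> 1"
  shows "integral {0..1} (\<lambda>t. if t \<le> v then A else B) = v * A + (1-v) * B"
proof -
  have 1: "((\<lambda>t. if t \<le> v then A else B) has_integral (v * A)) {0..v}"
    apply (rule has_integral_spike_finite[where S="{}" and f="\<lambda>t. A"])
    using has_integral_const_real[of A 0 v] assms by auto
  have 2: "((\<lambda>t. if t \<le> v then A else B) has_integral ((1-v) * B)) {v..1}"
    apply (rule has_integral_spike_finite[where S="{v}" and f="\<lambda>t. B"])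
    using has_integral_const_real[of B v 1] assms by auto
  show ?thesis using has_integral_combine[OF assms 1 2] by (simp add: integral_unique)
qed

lemma comb3:
  fixes f :: "real \<Rightarrow> real"
  assumes "0 \<le> a" "a \<le> b" "b \<le> 1"
    "(f has_integral I1) {0..a}" "(f has_integral I2) {a..b}" "(f has_integral I3) {b..1}"
  shows "(f has_integral (I1+I2+I3)) {0..1}"
proof -
  have "(f has_integral (I1+I2)) {0..b}" using has_integral_combine[OF assms(1,2,4,5)] .
  then show ?thesis using has_integral_combine[OF _ assms(3) _ assms(6)] assms by simp
qed

lemma wsetup:
  assumes "\<mu> \<in> {0..2::real}"
  defines "w \<equiv> v1 \<mu>"
  shows "1/2 \<le> w" "w \<le> 1" "v0 \<mu> = 1 - w" "\<mu>/2 = 1/w - 1"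
  using assms by (auto simp: v1_def v0_def field_simps)

lemma h1w:
  assumes "\<mu> \<in> {0..2::real}"
  shows "h1 \<mu> v = (if v \<le> 1 - v1 \<mu> then 0 else if v \<le> v1 \<mu> then (v - 1 + v1 \<mu>)/v1 \<mu> else 2 - 1/v)"
proof -
  have p: "v1 \<mu> > 0" using wsetup[OF assms] by linarith
  have e: "v0 \<mu> = 1 - v1 \<mu>" "\<mu>/2 = 1/v1 \<mu> - 1" using wsetup[OF assms] by auto
  show ?thesis unfolding h1_def e using p by (simp add: field_simps)
qed

lemma h2w:
  assumes "\<mu> \<in> {0..2::real}"
  shows "h2 \<mu> v = (if v \<le> 1 - v1 \<mu> then v/(1-v) else if v \<le> v1 \<mu> then v/v1 \<mu> else 1)"
proof -
  have p: "v1 \<mu> > 0" using wsetup[OF assms] by linarith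
  have e: "v0 \<mu> = 1 - v1 \<mu>" "v + \<mu>/2 * v = v/v1 \<mu>" using wsetup[OF assms] p assms by (auto simp: v1_def field_simps)
  show ?thesis unfolding h2_def e using p by (simp add: field_simps)
qed

lemma psi_formula:
  assumes "\<mu> \<in> {0..2::real}"
  shows "psi_h (h_mu \<mu>) = - 2 * (v1 \<mu>)\<^sup>2 + 6 * v1 \<mu> - 5 + 1 / v1 \<mu>"
proof -
  define w where "w = v1 \<mu>"
  have w: "1/2 \<le> w" "w \<le> 1" using wsetup[OF assms] w_def by auto
  define f where "f v = v * h1 \<mu> v" for v
  have "integral {0..1} (\<lambda>v. integral {0..1} (\<lambda>t. (if t \<le> v then 1 else 0) * h_mu \<mu> t v))
      = integral {0..1} f"
  proof (rule integral_cong)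
    fix v :: real assume "v \<in> {0..1}"
    then show "integral {0..1} (\<lambda>t. (if t \<le> v then 1 else 0) * h_mu \<mu> t v) = f v"
    proof -
      assume v: "v \<in> {0..1}"
      have "integral {0..1} (\<lambda>t. if t \<le> v then h1 \<mu> v else 0) = v * h1 \<mu> v"
        using inner[of v "h1 \<mu> v" 0] v by simp
      moreover have "(\<lambda>t. (if t \<le> v then 1 else 0) * h_mu \<mu> t v) =
        (\<lambda>t. if t \<le> v then h1 \<mu> v else 0)" by (auto simp: h_mu_def fun_eq_iff)
      ultimately show ?thesis by (simp add: f_def)
    qed
  qed
  moreover
  define G where "G v = (v^3/3 - (1-w) * v^2/2)/w" for v
  have "(f has_integral (0 + (G w - G (1-w)) + ((1^2-1) - (w^2 - w)))) {0..1}"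
  proof (rule comb3)
    show "(f has_integral 0) {0..1-w}"
      apply (rule has_integral_spike_finite[where S="{}" and f="\<lambda>t. 0"])
      using assms by (auto simp: f_def h1w w_def)
    show "(f has_integral (G w - G (1-w))) {1-w..w}"
      apply (rule has_integral_spike_finite[where S="{1-w}" and f="\<lambda>v. v * (v-1+w)/w"])
        apply simp
      using assms apply (auto simp: f_def h1w w_def)[1]
      apply (rule ftc) using w apply simp
      unfolding G_def
      apply (rule derivative_eq_intros refl | simp)+
      using w by (simp add: field_simps power2_eq_square)
    show "(f has_integral ((1^2-1) - (w^2 - w))) {w..1}"
      apply (rule has_integral_spike_finite[where S="{w}" and f="\<lambda>v. 2 * v - 1"])
        apply simp
      using assms w apply (auto simp: f_def h1w w_def field_simps)[1]
      apply (rule ftc[where F="\<lambda>v. v^2 - v"]) using w apply simp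
      apply (rule derivative_eq_intros refl | simp)+
      done
  qed (use w in auto)
  ultimately show ?thesis
    unfolding psi_h_def w_def[symmetric] using w
    by (simp add: integral_unique G_def field_simps power2_eq_square power3_eq_cube)
qed


lemma aux1: "x < (1::real) \<Longrightarrow> (1-x) * (x/(1-x))^2 = x^2/(1-x)"
proof -
  assume "x < 1"
  then have "1 - x \<noteq> 0" by simp
  then show ?thesis by (simp add: power_divide power2_eq_square)
qed

lemma xi_formula:
  assumes "\<mu> \<in> {0..2::real}"
  shows "xi_h (h_mu \<mu>) = - 4 * (v1 \<mu>)\<^sup>2 + 20 * v1 \<mu> - 17 + 2 / v1 \<mu>
                               - 1 / (v1 \<mu>)\<^sup>2 - 12 * ln (v1 \<mu>)"
proof -
  define w where "w = v1 \<mu>"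
  have w: "1/2 \<le> w" "w \<le> 1" using wsetup[OF assms] w_def by auto
  define f where "f v = v * (h1 \<mu> v)\<^sup>2 + (1 - v) * (h2 \<mu> v)\<^sup>2" for v
  have "integral {0..1} (\<lambda>v. integral {0..1} (\<lambda>t. (h_mu \<mu> t v)\<^sup>2))
      = integral {0..1} f"
  proof (rule integral_cong)
    fix v :: real assume v: "v \<in> {0..1}"
    have "integral {0..1} (\<lambda>t. if t \<le> v then (h1 \<mu> v)\<^sup>2 else (h2 \<mu> v)\<^sup>2) = f v"
      using inner[of v "(h1 \<mu> v)\<^sup>2" "(h2 \<mu> v)\<^sup>2"] v by (simp add: f_def)
    moreover have "(\<lambda>t. (h_mu \<mu> t v)\<^sup>2) =
        (\<lambda>t. if t \<le> v then (h1 \<mu> v)\<^sup>2 else (h2 \<mu> v)\<^sup>2)" by (auto simp: h_mu_def fun_eq_iff)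
    ultimately show "integral {0..1} (\<lambda>t. (h_mu \<mu> t v)\<^sup>2) = f v" by simp
  qed
  moreover
  define F1 where "F1 v = - ln (1 - v) - v - v^2/2" for v :: real
  define F2 where "F2 v = ((2 * w - 1) * v^3/3 + (1-w)^2 * v^2/2)/w^2" for v :: real
  define F3 where "F3 v = 3 * v^2/2 - 3 * v + ln v" for v :: real
  have "(f has_integral ((F1 (1-w) - F1 0) + (F2 w - F2 (1-w)) + (F3 1 - F3 w))) {0..1}"
  proof (rule comb3)
    show "(f has_integral (F1 (1-w) - F1 0)) {0..1-w}"
      apply (rule has_integral_spike_finite[where S="{}" and f="\<lambda>v. v^2/(1-v)"])
        apply simp
      subgoal for x using assms w aux1[of x] by (auto simp: f_def h1w h2w w_def)
      apply (rule ftc) using w apply simp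
      subgoal for x
      proof -
        assume x: "x \<in> {0..1-w}"
        then have x1: "1 - x > 0" using w by auto
        have "(F1 has_real_derivative (- (- 1 / (1 - x)) - 1 - x)) (at x)"
          unfolding F1_def using x1
          by (auto intro!: derivative_eq_intros simp: field_simps)
        moreover have "- (- 1 / (1 - x)) - 1 - x = x^2/(1-x)" using x1
          by (simp add: field_simps power2_eq_square)
        ultimately show ?thesis by simp
      qed
      done
    show "(f has_integral (F2 w - F2 (1-w))) {1-w..w}"
      apply (rule has_integral_spike_finite[where S="{1-w}" and f="\<lambda>v. ((2 * w - 1) * v^2 + (1-w)^2 * v)/w^2"])
        apply simp
      using assms w apply (auto simp: f_def h1w h2w w_def field_simps power2_eq_square)[1]
      apply (rule ftc) using w apply simp
      unfolding F2_def
      apply (rule derivative_eq_intros refl | simp)+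
      using w apply (simp add: field_simps power2_eq_square) by (simp add: eval_nat_numeral algebra_simps)
    show "(f has_integral (F3 1 - F3 w)) {w..1}"
      apply (rule has_integral_spike_finite[where S="{w}" and f="\<lambda>v. 3 * v - 3 + 1/v"])
        apply simp
      using assms w apply (auto simp: f_def h1w h2w w_def field_simps power2_eq_square)[1]
      apply (rule ftc) using w apply simp
      subgoal for x
      proof -
        assume x: "x \<in> {w..1}"
        then have x1: "x > 0" using w by auto
        have "(F3 has_real_derivative (3 * (2 * x) / 2 - 3 + 1 / x)) (at x)"
          unfolding F3_def using x1
          by (auto intro!: derivative_eq_intros simp: field_simps)
        moreover have "3 * (2 * x) / 2 - 3 + 1 / x = 3 * x - 3 + 1/x" by simp
        ultimately show ?thesis by simp
      qed
      done
  qed (use w in auto)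
  ultimately have I: "integral {0..1} (\<lambda>v. integral {0..1} (\<lambda>t. (h_mu \<mu> t v)\<^sup>2))
     = (F1 (1-w) - F1 0) + (F2 w - F2 (1-w)) + (F3 1 - F3 w)"
    by (simp add: integral_unique)
  have "(F1 (1-w) - F1 0) + (F2 w - F2 (1-w)) + (F3 1 - F3 w) =
     (- ln w - (1-w) - (1-w)^2/2) + (F2 w - F2 (1-w)) + (-3/2 - (3 * w^2/2 - 3 * w + ln w))"
    by (simp add: F1_def F3_def)
  also have "6 * \<dots> - 2 = - 4 * w\<^sup>2 + 20 * w - 17 + 2 / w - 1 / w\<^sup>2 - 12 * ln w"
    unfolding F2_def using w
    by (simp add: field_simps power2_eq_square power3_eq_cube)
  finally show ?thesis
    unfolding xi_h_def I w_def[symmetric] .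
qed



definition PP :: "real \<Rightarrow> real" where "PP w = - 2 * w\<^sup>2 + 6 * w - 5 + 1 / w"
definition XX :: "real \<Rightarrow> real" where
  "XX w = - 4 * w\<^sup>2 + 20 * w - 17 + 2 / w - 1 / w\<^sup>2 - 12 * ln w"

lemma PP_cont: "continuous_on {a..b} PP" if "0 < a" for a b
  unfolding PP_def using that by (auto intro!: continuous_intros)

lemma XX_cont: "continuous_on {a..b} XX" if "0 < a" for a b
  unfolding XX_def using that by (auto intro!: continuous_intros)

lemma PP_mono: assumes "1/2 \<le> a" "a < b" "b \<le> 1" shows "PP a < PP b"
proof (rule DERIV_pos_imp_increasing_open[OF assms(2)])
  show "continuous_on {a..b} PP" using PP_cont assms by simp
  fix x assume x: "a < x" "x < b"
  then have x0: "x > 0" "2*x - 1 > 0" using assms by auto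
  have "(PP has_real_derivative (- 2 * (2 * x) + 6 - 1 / x^2)) (at x)"
    unfolding PP_def using x0 by (auto intro!: derivative_eq_intros simp: field_simps power2_eq_square)
  moreover have "- 2 * (2 * x) + 6 - 1 / x^2 = (2*x - 1) * (1 + 2*x - 2*x^2) / x^2"
    using x0 by (simp add: field_simps power2_eq_square)
  moreover have "1 + 2*x - 2*x^2 > 0"
  proof -
    have "2*x*(1-x) \<ge> 0" using x assms by simp
    then show ?thesis by (simp add: power2_eq_square algebra_simps)
  qed
  ultimately show "\<exists>y. (PP has_real_derivative y) (at x) \<and> y > 0"
    using x0 by (metis divide_pos_pos mult_pos_pos zero_less_power)
qed

lemma XX_mono: assumes "1/2 \<le> a" "a < b" "b \<le> 1" shows "XX b < XX a"
proof (rule DERIV_neg_imp_decreasing_open[OF assms(2)])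
  show "continuous_on {a..b} XX" using XX_cont assms by simp
  fix x assume x: "a < x" "x < b"
  then have x0: "x > 0" "2*x - 1 > 0" "x - 1 < 0" using assms by auto
  have "(XX has_real_derivative (- 4 * (2 * x) + 20 - 2 / x^2 + 2 / x^3 - 12 / x)) (at x)"
    unfolding XX_def using x0 by (auto intro!: derivative_eq_intros simp: field_simps power2_eq_square power3_eq_cube)
  moreover have "- 4 * (2 * x) + 20 - 2 / x^2 + 2 / x^3 - 12 / x = (x - 1) * ((2*x - 1) * (2 + 4*x*(1-x))) / x^3"
    using x0 by (simp add: field_simps power2_eq_square power3_eq_cube)
  moreover have "2 + 4*x*(1-x) > 0" using x0 by (simp add: mult_pos_pos add_pos_pos)
  ultimately show "\<exists>y. (XX has_real_derivative y) (at x) \<and> y < 0"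
    using x0 by (metis divide_neg_pos mult_neg_pos mult_pos_pos zero_less_power)
qed


lemma psiP: "\<mu> \<in> {0..2} \<Longrightarrow> psi_h (h_mu \<mu>) = PP (v1 \<mu>)"
  using psi_formula PP_def by simp
lemma xiX: "\<mu> \<in> {0..2} \<Longrightarrow> xi_h (h_mu \<mu>) = XX (v1 \<mu>)"
  using xi_formula XX_def by simp

lemma v1_cont: "continuous_on {0..2} (\<lambda>\<mu>. v1 \<mu>)"
  unfolding v1_def by (auto intro!: continuous_intros)

lemma v1_range: "\<mu> \<in> {0..2} \<Longrightarrow> v1 \<mu> \<in> {1/2..1}"
  using wsetup(1,2)[of \<mu>] by auto

lemma v1_anti: "a \<in> {0..2} \<Longrightarrow> b \<in> {0..2} \<Longrightarrow> a < b \<Longrightarrow> v1 b < v1 a"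
  unfolding v1_def by (auto simp: field_simps)

lemma psi_cont: "continuous_on {0..2} (\<lambda>\<mu>. psi_h (h_mu \<mu>))"
proof -
  have "continuous_on {0..2} (PP \<circ> v1)"
    by (rule continuous_on_compose[OF v1_cont]) (rule continuous_on_subset[OF PP_cont[of "1/2" 1]], auto dest: v1_range)
  then show ?thesis by (rule continuous_on_cong[THEN iffD1, rotated 2]) (auto simp: psiP)
qed

lemma xi_cont: "continuous_on {0..2} (\<lambda>\<mu>. xi_h (h_mu \<mu>))"
proof -
  have "continuous_on {0..2} (XX \<circ> v1)"
    by (rule continuous_on_compose[OF v1_cont]) (rule continuous_on_subset[OF XX_cont[of "1/2" 1]], auto dest: v1_range)
  then show ?thesis by (rule continuous_on_cong[THEN iffD1, rotated 2]) (auto simp: xiX)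
qed

theorem mainTheorem5:
  shows "(\<forall>\<mu>\<in>{0..2::real}.
            psi_h (h_mu \<mu>) = - 2 * (v1 \<mu>)\<^sup>2 + 6 * v1 \<mu> - 5 + 1 / v1 \<mu>
          \<and> xi_h (h_mu \<mu>) = - 4 * (v1 \<mu>)\<^sup>2 + 20 * v1 \<mu> - 17 + 2 / v1 \<mu>
                               - 1 / (v1 \<mu>)\<^sup>2 - 12 * ln (v1 \<mu>))
       \<and> continuous_on {0..2} (\<lambda>\<mu>. psi_h (h_mu \<mu>))
       \<and> (\<forall>a\<in>{0..2}. \<forall>b\<in>{0..2}. a < b \<longrightarrow> psi_h (h_mu b) < psi_h (h_mu a))
       \<and> psi_h (h_mu 0) = 0 \<and> psi_h (h_mu 2) = - 1 / 2
       \<and> continuous_on {0..2} (\<lambda>\<mu>. xi_h (h_mu \<mu>))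
       \<and> (\<forall>a\<in>{0..2}. \<forall>b\<in>{0..2}. a < b \<longrightarrow> xi_h (h_mu a) < xi_h (h_mu b))
       \<and> xi_h (h_mu 0) = 0 \<and> xi_h (h_mu 2) = 12 * ln 2 - 8"
  proof (intro conjI ballI impI)
  fix \<mu> :: real assume "\<mu> \<in> {0..2}"
  then show "psi_h (h_mu \<mu>) = - 2 * (v1 \<mu>)\<^sup>2 + 6 * v1 \<mu> - 5 + 1 / v1 \<mu>" by (rule psi_formula)
next
  fix \<mu> :: real assume "\<mu> \<in> {0..2}"
  then show "xi_h (h_mu \<mu>) = - 4 * (v1 \<mu>)\<^sup>2 + 20 * v1 \<mu> - 17 + 2 / v1 \<mu>
                               - 1 / (v1 \<mu>)\<^sup>2 - 12 * ln (v1 \<mu>)" by (rule xi_formula)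
next
  show "continuous_on {0..2} (\<lambda>\<mu>. psi_h (h_mu \<mu>))" by (rule psi_cont)
next
  show "continuous_on {0..2} (\<lambda>\<mu>. xi_h (h_mu \<mu>))" by (rule xi_cont)
next
  fix a b :: real assume ab: "a \<in> {0..2}" "b \<in> {0..2}" "a < b"
  then show "psi_h (h_mu b) < psi_h (h_mu a)"
    using PP_mono[of "v1 b" "v1 a"] v1_range[of a] v1_range[of b] v1_anti[OF ab] psiP by auto
next
  fix a b :: real assume ab: "a \<in> {0..2}" "b \<in> {0..2}" "a < b"
  then show "xi_h (h_mu a) < xi_h (h_mu b)"
    using XX_mono[of "v1 b" "v1 a"] v1_range[of a] v1_range[of b] v1_anti[OF ab] xiX by auto
next
  show "psi_h (h_mu 0) = 0" by (simp add: psiP PP_def v1_def)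
next
  show "psi_h (h_mu 2) = - 1 / 2" by (simp add: psiP PP_def v1_def power2_eq_square)
next
  show "xi_h (h_mu 0) = 0" by (simp add: xiX XX_def v1_def)
next
  show "xi_h (h_mu 2) = 12 * ln 2 - 8" by (simp add: xiX XX_def v1_def power2_eq_square ln_div)
qed

end
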